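(* Let $\lambda=(\lambda_1,\dots,\lambda_r)$ be a partition of $n$ with conjugate $\lambda'=(\lambda'_1,\dots,\lambda'_{r'})$, and let $i\ge 1$. Then $h_{2,1}(\lambda)\ge i$ and $h_{1,2}(\lambda)\ge i$ if and only if each of the two character polynomials $q_{[\lambda_2,\dots,\lambda_r]}$ and $q_{[\lambda'_2,\dots,\lambda'_{r'}]}$ contains, in some monomial with non-zero coefficient, a variable $x_j$ with $j\ge i$.
   Context: For a partition $\lambda$ and a cell $(x,y)$ of its Young (Ferrers) diagram (row $x$, column $y$, English convention), $h_{x,y}(\lambda)$ is the hook length at $(x,y)$, i.e. the number of cells to the right of $(x,y)$ in row $x$, plus the number of cells below it in column $y$, plus one; if $(x,y)$ is not a cell of $\lambda$ set $h_{x,y}(\lambda)=0$. For a partition $\mu$ of $m$ (possibly empty, $m=0$), its character polynomial is $q_\mu(x_1,\dots,x_m)=\downarrow\Big(\sum_{\alpha\vdash m}\frac{\chi_\mu(\alpha)}{z_\alpha}\prod_{k=1}^m (k x_k-1)^{a_k}\Big)$, where the sum is over partitions (cycle types) $\alpha=(1^{a_1},2^{a_2},\dots,m^{a_m})$ of $m$, $\chi_\mu(\alpha)$ is the irreducible character of $S_m$ indexed by $\mu$ evaluated at cycle type $\alpha$, $z_\alpha=\prod_k a_k!\,k^{a_k}$, and $\downarrow$ is the linear map sending each monomial $x_1^{c_1}\cdots x_m^{c_m}$ to the product of falling factorials $(x_1)_{c_1}\cdots(x_m)_{c_m}$. (For $\mu$ empty, $q_\mu=1$.) It satisfies $\chi_\lambda(\alpha)=q_{[\lambda_2,\dots,\lambda_r]}(a_1,\dots,a_{n-\lambda_1})$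 for every cycle type $\alpha=(1^{a_1},\dots,n^{a_n})$ of $S_n$. *)

theory Defs
  imports Complex_Main "HOL-Library.Poly_Mapping" "HOL-Combinatorics.Permutations"
begin

definition is_partition :: "nat \<Rightarrow> nat list \<Rightarrow> bool" where
  "is_partition n lam \<longleftrightarrow> sorted_wrt (\<ge>) lam \<and> (\<forall>p\<in>set lam. 0 < p) \<and> sum_list lam = n"

definition conj_part :: "nat list \<Rightarrow> nat list" where
  "conj_part lam = map (\<lambda>j. length (filter (\<lambda>p. j \<le> p) lam))
                      [1..<(if lam = [] then 0 else hd lam) + 1]"

definition part_nth :: "nat list \<Rightarrow> nat \<Rightarrow> nat" where
  "part_nth lam x = (if 1 \<le> x \<and> x \<le> length lam then lam ! (x - 1) else 0)"

(* hook length at cell (x,y) (row x, column y, 1-indexed); 0 if not a cell *)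
definition hook :: "nat \<Rightarrow> nat \<Rightarrow> nat list \<Rightarrow> nat" where
  "hook x y lam = (if 1 \<le> x \<and> 1 \<le> y \<and> y \<le> part_nth lam x
     then (part_nth lam x - y) + (part_nth (conj_part lam) y - x) + 1 else 0)"

(* Irreducible character chi_mu(alpha) of S_m (mu, alpha partitions of m),
   defined by the Frobenius formula: chi_mu(alpha) is the coefficient of
   x^(mu+delta) in a_delta * p_alpha, in l = length mu variables, with
   delta = (l-1,...,1,0), a_delta = sum_sigma sgn(sigma) prod_i x_i^(delta_(sigma i))
   and p_alpha = prod_k (x_0^(alpha_k) + ... + x_(l-1)^(alpha_k)), the latter
   expanded as a sum over maps f assigning to each part k a variable f k. *)
definition character :: "nat list \<Rightarrow> nat list \<Rightarrow> int" where
  "character mu alpha =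
     (let l = length mu; L = length alpha in
      \<Sum>\<sigma>\<in>{\<sigma>. \<sigma> permutes {0..<l}}. sign \<sigma> *
        int (card {f \<in> {0..<L} \<rightarrow>\<^sub>E {0..<l}.
           \<forall>i<l. mu ! i + (l - 1 - i) =
                  (l - 1 - \<sigma> i) + (\<Sum>k\<in>{k. k < L \<and> f k = i}. alpha ! k)}))"

(* multivariate polynomials over Q: monomials are finitely supported exponent maps
   (variable index k \<mapsto> exponent); variable x_k is index k *)
type_synonym mpoly = "(nat \<Rightarrow>\<^sub>0 nat) \<Rightarrow>\<^sub>0 rat"

definition Var :: "nat \<Rightarrow> mpoly" where
  "Var k = Poly_Mapping.single (Poly_Mapping.single k 1) 1"

definition Const :: "rat \<Rightarrow> mpoly" where
  "Const c = Poly_Mapping.single 0 c"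

definition ffact_var :: "nat \<Rightarrow> nat \<Rightarrow> mpoly" where
  "ffact_var k c = (\<Prod>t<c. Var k - Const (of_nat t))"

definition down :: "mpoly \<Rightarrow> mpoly" where
  "down P = (\<Sum>c\<in>Poly_Mapping.keys P.
               Const (Poly_Mapping.lookup P c) *
               (\<Prod>k\<in>Poly_Mapping.keys c. ffact_var k (Poly_Mapping.lookup c k)))"

definition zee :: "nat list \<Rightarrow> nat" where
  "zee alpha = (\<Prod>k\<in>set alpha. fact (count_list alpha k) * k ^ count_list alpha k)"

definition char_poly :: "nat list \<Rightarrow> mpoly" where
  "char_poly mu = (let m = sum_list mu in
     down (\<Sum>alpha\<in>{alpha. is_partition m alpha}.
        Const (of_int (character mu alpha) / of_nat (zee alpha)) *
        (\<Prod>k\<in>{1..m}. (Const (of_nat k) * Var k - 1) ^ count_list alpha k)))"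

definition has_var_ge :: "nat \<Rightarrow> mpoly \<Rightarrow> bool" where
  "has_var_ge i P \<longleftrightarrow> (\<exists>c. Poly_Mapping.lookup P c \<noteq> 0 \<and>
                          (\<exists>j\<ge>i. Poly_Mapping.lookup c j \<noteq> 0))"

end

theory Submission
  imports Defs "HOL-Library.Multiset"
begin


definition vars :: "mpoly \<Rightarrow> nat set" where
  "vars P = (\<Union>c\<in>Poly_Mapping.keys P. Poly_Mapping.keys c)"

lemma has_var_ge_vars: "has_var_ge i P \<longleftrightarrow> (\<exists>j\<in>vars P. i \<le> j)"
  unfolding has_var_ge_def vars_def
  by (simp only: in_keys_iff UN_iff Bex_def) blast

lemma keys_add_nat: "Poly_Mapping.keys (a + b :: nat \<Rightarrow>\<^sub>0 nat) = Poly_Mapping.keys a \<union> Poly_Mapping.keys b"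
  by (auto simp: in_keys_iff lookup_add)

lemma vars_add: "vars (P + Q) \<subseteq> vars P \<union> vars Q"
  unfolding vars_def using keys_add[of P Q] by blast

lemma vars_diff: "vars (P - Q) \<subseteq> vars P \<union> vars Q"
  unfolding vars_def using keys_diff[of P Q] by blast

lemma vars_mult: "vars (P * Q) \<subseteq> vars P \<union> vars Q"
proof
  fix x assume "x \<in> vars (P * Q)"
  then obtain c where c: "c \<in> Poly_Mapping.keys (P*Q)" "x \<in> Poly_Mapping.keys c"
    unfolding vars_def by blast
  then obtain a b where "c = a + b" "a \<in> Poly_Mapping.keys P" "b \<in> Poly_Mapping.keys Q"
    using keys_mult[of P Q] by blast
  then show "x \<in> vars P \<union> vars Q" using c unfolding vars_def by (auto simp: keys_add_nat)
qed

lemma vars_zero[simp]: "vars 0 = {}" by (simp add: vars_def)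
lemma vars_one[simp]: "vars 1 = {}" by (simp add: vars_def)
lemma vars_Const: "vars (Const c) = {}" by (simp add: vars_def Const_def)
lemma vars_Var: "vars (Var k) \<subseteq> {k}" by (simp add: vars_def Var_def)

lemma vars_sum: "vars (sum f A) \<subseteq> (\<Union>a\<in>A. vars (f a))"
proof (induction A rule: infinite_finite_induct)
  case (insert x F) then show ?case using vars_add[of "f x" "sum f F"] by auto
qed auto

lemma vars_prod: "vars (prod f A) \<subseteq> (\<Union>a\<in>A. vars (f a))"
proof (induction A rule: infinite_finite_induct)
  case (insert x F) then show ?case using vars_mult[of "f x" "prod f F"] by auto
qed auto

lemma vars_power: "vars (P ^ n) \<subseteq> vars P"
proof (induction n)
  case (Suc n) then show ?case using vars_mult[of P "P^n"] by auto
qed auto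

lemma vars_ffact: "vars (ffact_var k c) \<subseteq> {k}"
  unfolding ffact_var_def
  using vars_prod[of "\<lambda>t. Var k - Const (of_nat t)" "{..<c}"] vars_diff vars_Var vars_Const by blast

lemma vars_down: "vars (down P) \<subseteq> vars P"
proof -
  have "vars (down P) \<subseteq> (\<Union>c\<in>Poly_Mapping.keys P. vars (Const (Poly_Mapping.lookup P c) *
               (\<Prod>k\<in>Poly_Mapping.keys c. ffact_var k (Poly_Mapping.lookup c k))))"
    unfolding down_def by (rule vars_sum)
  also have "\<dots> \<subseteq> (\<Union>c\<in>Poly_Mapping.keys P. Poly_Mapping.keys c)"
  proof (intro UN_mono order.refl)
    fix c
    have "vars (Const (Poly_Mapping.lookup P c) *
               (\<Prod>k\<in>Poly_Mapping.keys c. ffact_var k (Poly_Mapping.lookup c k)))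
       \<subseteq> vars (\<Prod>k\<in>Poly_Mapping.keys c. ffact_var k (Poly_Mapping.lookup c k))"
      using vars_mult vars_Const by blast
    also have "\<dots> \<subseteq> Poly_Mapping.keys c"
      using vars_prod[of "\<lambda>k. ffact_var k (Poly_Mapping.lookup c k)" "Poly_Mapping.keys c"] vars_ffact
      by blast
    finally show "vars (Const (Poly_Mapping.lookup P c) *
               (\<Prod>k\<in>Poly_Mapping.keys c. ffact_var k (Poly_Mapping.lookup c k))) \<subseteq> Poly_Mapping.keys c" .
  qed
  finally show ?thesis by (simp add: vars_def)
qed

definition lepm :: "(nat \<Rightarrow>\<^sub>0 nat) \<Rightarrow> (nat \<Rightarrow>\<^sub>0 nat) \<Rightarrow> bool" where
  "lepm c e \<longleftrightarrow> (\<forall>k. Poly_Mapping.lookup c k \<le> Poly_Mapping.lookup e k)"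

definition pdom :: "(nat \<Rightarrow>\<^sub>0 nat) \<Rightarrow> mpoly \<Rightarrow> bool" where
  "pdom e P \<longleftrightarrow> (\<forall>c. Poly_Mapping.lookup P c \<noteq> 0 \<longrightarrow> lepm c e)"

lemma lepm_antisym: "lepm a b \<Longrightarrow> lepm b a \<Longrightarrow> a = b"
  unfolding lepm_def by (intro poly_mapping_eqI) (meson antisym)

lemma pdom_mult:
  assumes P: "pdom e1 P" and Q: "pdom e2 Q" shows "pdom (e1 + e2) (P * Q)"
  unfolding pdom_def lepm_def
proof (intro allI impI)
  fix c k assume c: "Poly_Mapping.lookup (P * Q) c \<noteq> 0"
  then have "c \<in> Poly_Mapping.keys (P*Q)" by (simp add: in_keys_iff)
  then obtain a b where ab: "c = a + b" "a \<in> Poly_Mapping.keys P" "b \<in> Poly_Mapping.keys Q"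
    using keys_mult[of P Q] by blast
  have "lepm a e1" using P ab(2) unfolding pdom_def by (simp add: in_keys_iff)
  moreover have "lepm b e2" using Q ab(3) unfolding pdom_def by (simp add: in_keys_iff)
  ultimately show "Poly_Mapping.lookup c k \<le> Poly_Mapping.lookup (e1 + e2) k"
    using ab(1) unfolding lepm_def by (simp add: lookup_add add_mono)
qed

lemma pdom_add: "pdom e P \<Longrightarrow> pdom e Q \<Longrightarrow> pdom e (P + Q)"
  unfolding pdom_def
proof (intro allI impI)
  fix c assume "\<forall>c. Poly_Mapping.lookup P c \<noteq> 0 \<longrightarrow> lepm c e" "\<forall>c. Poly_Mapping.lookup Q c \<noteq> 0 \<longrightarrow> lepm c e"
    "Poly_Mapping.lookup (P + Q) c \<noteq> 0"
  moreover then have "Poly_Mapping.lookup P c \<noteq> 0 \<or> Poly_Mapping.lookup Q c \<noteq> 0" by (auto simp: lookup_add)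
  ultimately show "lepm c e" by blast
qed

lemma pdom_diff: "pdom e P \<Longrightarrow> pdom e Q \<Longrightarrow> pdom e (P - Q)"
  unfolding pdom_def
proof (intro allI impI)
  fix c assume "\<forall>c. Poly_Mapping.lookup P c \<noteq> 0 \<longrightarrow> lepm c e" "\<forall>c. Poly_Mapping.lookup Q c \<noteq> 0 \<longrightarrow> lepm c e"
    "Poly_Mapping.lookup (P - Q) c \<noteq> 0"
  moreover then have "Poly_Mapping.lookup P c \<noteq> 0 \<or> Poly_Mapping.lookup Q c \<noteq> 0" by (auto simp: lookup_minus)
  ultimately show "lepm c e" by blast
qed

lemma pdom_zero_iff: "pdom 0 P \<longleftrightarrow> (\<forall>c. Poly_Mapping.lookup P c \<noteq> 0 \<longrightarrow> c = 0)"
proof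
  assume H: "pdom 0 P"
  show "\<forall>c. Poly_Mapping.lookup P c \<noteq> 0 \<longrightarrow> c = 0"
  proof (intro allI impI)
    fix c assume "Poly_Mapping.lookup P c \<noteq> 0"
    then have "lepm c 0" using H unfolding pdom_def by blast
    then show "c = 0" unfolding lepm_def by (simp add: poly_mapping_eqI)
  qed
next
  assume "\<forall>c. Poly_Mapping.lookup P c \<noteq> 0 \<longrightarrow> c = 0"
  then show "pdom 0 P" unfolding pdom_def lepm_def by auto
qed

lemma pdom_Const: "pdom 0 (Const c)"
  unfolding pdom_zero_iff Const_def by (simp add: lookup_single when_def)

lemma pdom_one: "pdom 0 1"
  unfolding pdom_zero_iff by (simp add: lookup_one when_def)

lemma pdom_Var: "pdom (Poly_Mapping.single k 1) (Var k)"
  unfolding pdom_def lepm_def Var_def by (simp add: lookup_single when_def)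

lemma pdom_prod: "finite A \<Longrightarrow> (\<And>a. a \<in> A \<Longrightarrow> pdom (e a) (P a)) \<Longrightarrow> pdom (sum e A) (prod P A)"
proof (induction A rule: finite_induct)
  case empty then show ?case using pdom_one by simp
next
  case (insert x F) then show ?case by (simp add: pdom_mult)
qed

lemma pdom_lookup: "pdom e P \<Longrightarrow> Poly_Mapping.lookup P c \<noteq> 0 \<Longrightarrow> lepm c e"
  unfolding pdom_def by blast

lemma lepm_add_eq:
  assumes 1: "lepm a e1" and 2: "lepm b e2" and 3: "a + b = e1 + e2"
  shows "a = e1 \<and> b = e2"
proof -
  have h: "Poly_Mapping.lookup a k = Poly_Mapping.lookup e1 k \<and> Poly_Mapping.lookup b k = Poly_Mapping.lookup e2 k" for k
  proof -
    have "Poly_Mapping.lookup (a + b) k = Poly_Mapping.lookup (e1 + e2) k" using 3 by simp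
    then have "Poly_Mapping.lookup a k + Poly_Mapping.lookup b k = Poly_Mapping.lookup e1 k + Poly_Mapping.lookup e2 k"
      by (simp only: lookup_add)
    moreover have "Poly_Mapping.lookup a k \<le> Poly_Mapping.lookup e1 k" "Poly_Mapping.lookup b k \<le> Poly_Mapping.lookup e2 k"
      using 1 2 unfolding lepm_def by auto
    ultimately show ?thesis by linarith
  qed
  show ?thesis using h by (simp add: poly_mapping_eqI)
qed

lemma top_mult:
  assumes "pdom e1 P" "pdom e2 Q"
  shows "Poly_Mapping.lookup (P * Q) (e1 + e2) = Poly_Mapping.lookup P e1 * Poly_Mapping.lookup Q e2"
proof -
  have "(\<lambda>l. Poly_Mapping.lookup P l * (\<Sum>q. Poly_Mapping.lookup Q q when e1 + e2 = l + q))
      = (\<lambda>l. (Poly_Mapping.lookup P e1 * Poly_Mapping.lookup Q e2) when l = e1)"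
  proof
    fix l
    show "Poly_Mapping.lookup P l * (\<Sum>q. Poly_Mapping.lookup Q q when e1 + e2 = l + q)
      = ((Poly_Mapping.lookup P e1 * Poly_Mapping.lookup Q e2) when l = e1)"
    proof (cases "l = e1")
      case True
      then show ?thesis by simp
    next
      case False
      have "(Poly_Mapping.lookup Q q when e1 + e2 = l + q) = 0" if "Poly_Mapping.lookup P l \<noteq> 0" for q
      proof (cases "Poly_Mapping.lookup Q q = 0")
        case False
        then have "lepm q e2" using assms(2) pdom_lookup by blast
        moreover have "lepm l e1" using that assms(1) pdom_lookup by blast
        ultimately show ?thesis using lepm_add_eq[of l e1 q e2] \<open>l \<noteq> e1\<close> by (auto simp: when_def)
      qed simp
      then show ?thesis using False by (cases "Poly_Mapping.lookup P l = 0") auto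
    qed
  qed
  then have "(\<Sum>l. Poly_Mapping.lookup P l * (\<Sum>q. Poly_Mapping.lookup Q q when e1 + e2 = l + q))
      = (\<Sum>l. (Poly_Mapping.lookup P e1 * Poly_Mapping.lookup Q e2) when l = e1)"
    by (rule arg_cong)
  also have "\<dots> = Poly_Mapping.lookup P e1 * Poly_Mapping.lookup Q e2"
    by (rule Sum_any_when_equal)
  finally show ?thesis by (simp only: lookup_mult)
qed

lemma top_prod: "finite A \<Longrightarrow> (\<And>a. a \<in> A \<Longrightarrow> pdom (e a) (P a)) \<Longrightarrow>
   Poly_Mapping.lookup (prod P A) (sum e A) = (\<Prod>a\<in>A. Poly_Mapping.lookup (P a) (e a))"
proof (induction A rule: finite_induct)
  case empty then show ?case by simp
next
  case (insert x F)
  have "pdom (sum e F) (prod P F)" using insert by (intro pdom_prod) auto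
  then show ?case using insert by (simp add: top_mult)
qed

lemma lookup_Const_mult: "Poly_Mapping.lookup (Const a * P) c = a * Poly_Mapping.lookup P c"
  unfolding Const_def by (simp flip: mult_map_scale_conv_mult add: map.rep_eq when_def)



definition yk :: "nat \<Rightarrow> mpoly" where "yk k = Const (of_nat k) * Var k - 1"
definition Ypol :: "nat \<Rightarrow> nat list \<Rightarrow> mpoly" where
  "Ypol m \<alpha> = (\<Prod>k\<in>{1..m}. yk k ^ count_list \<alpha> k)"
definition ex :: "nat \<Rightarrow> nat list \<Rightarrow> (nat \<Rightarrow>\<^sub>0 nat)" where
  "ex m \<alpha> = (\<Sum>k\<in>{1..m}. Poly_Mapping.single k (count_list \<alpha> k))"
definition FF :: "(nat \<Rightarrow>\<^sub>0 nat) \<Rightarrow> mpoly" where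
  "FF c = (\<Prod>k\<in>Poly_Mapping.keys c. ffact_var k (Poly_Mapping.lookup c k))"

lemma lepm_trans: "lepm a b \<Longrightarrow> lepm b c \<Longrightarrow> lepm a c"
  unfolding lepm_def using order_trans by blast

lemma pdom_mono: "pdom e P \<Longrightarrow> lepm e e' \<Longrightarrow> pdom e' P"
  unfolding pdom_def using lepm_trans by blast

lemma lepm_0: "lepm 0 e" by (simp add: lepm_def)

lemma Const_Var: "Const a * Var k = Poly_Mapping.single (Poly_Mapping.single k 1) a"
  unfolding Const_def Var_def by (simp add: mult_single)

lemma single_k1_ne0: "Poly_Mapping.single k (1::nat) \<noteq> 0"
  by (metis lookup_single_eq lookup_zero one_neq_zero)

lemma pdom_yk: "pdom (Poly_Mapping.single k 1) (yk k)"
proof -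
  have "pdom (0 + Poly_Mapping.single k 1) (Const (of_nat k) * Var k)"
    by (rule pdom_mult[OF pdom_Const pdom_Var])
  then have "pdom (Poly_Mapping.single k 1) (Const (of_nat k) * Var k)" by simp
  moreover have "pdom (Poly_Mapping.single k 1) 1" using pdom_mono[OF pdom_one lepm_0] .
  ultimately show ?thesis unfolding yk_def by (rule pdom_diff)
qed

lemma lookup_yk: "Poly_Mapping.lookup (yk k) (Poly_Mapping.single k 1) = of_nat k"
  unfolding yk_def Const_Var using single_k1_ne0[of k]
  by (simp add: lookup_minus lookup_one)

lemma pdom_ykpow: "pdom (Poly_Mapping.single k n) (yk k ^ n)"
proof (induction n)
  case 0 then show ?case using pdom_one by simp
next
  case (Suc n)
  have "pdom (Poly_Mapping.single k 1 + Poly_Mapping.single k n) (yk k * yk k ^ n)"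
    by (rule pdom_mult[OF pdom_yk Suc])
  then show ?case by (simp add: single_add[symmetric])
qed

lemma lookup_ykpow: "Poly_Mapping.lookup (yk k ^ n) (Poly_Mapping.single k n) = of_nat k ^ n"
proof (induction n)
  case 0 then show ?case by simp
next
  case (Suc n)
  have "Poly_Mapping.lookup (yk k * yk k ^ n) (Poly_Mapping.single k 1 + Poly_Mapping.single k n)
     = Poly_Mapping.lookup (yk k) (Poly_Mapping.single k 1) * Poly_Mapping.lookup (yk k ^ n) (Poly_Mapping.single k n)"
    by (rule top_mult[OF pdom_yk pdom_ykpow])
  then show ?case using Suc lookup_yk by (simp add: single_add[symmetric])
qed

lemma pdom_Ypol: "pdom (ex m \<alpha>) (Ypol m \<alpha>)"
  unfolding ex_def Ypol_def by (rule pdom_prod) (auto intro: pdom_ykpow)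

lemma lookup_Ypol: "Poly_Mapping.lookup (Ypol m \<alpha>) (ex m \<alpha>) = (\<Prod>k\<in>{1..m}. of_nat k ^ count_list \<alpha> k)"
  unfolding ex_def Ypol_def
  by (subst top_prod) (auto intro: pdom_ykpow simp: lookup_ykpow)

lemma lookup_Ypol_ne0: "Poly_Mapping.lookup (Ypol m \<alpha>) (ex m \<alpha>) \<noteq> 0"
  unfolding lookup_Ypol by (subst prod_zero_iff) auto

lemma sum_single_same: "(\<Sum>t<c. Poly_Mapping.single k (1::nat)) = Poly_Mapping.single k c"
  by (induction c) (auto simp: single_add[symmetric])

lemma pdom_ffact: "pdom (Poly_Mapping.single k c) (ffact_var k c)"
proof -
  have "pdom (\<Sum>t<c. Poly_Mapping.single k 1) (ffact_var k c)"
    unfolding ffact_var_def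
    by (rule pdom_prod) (simp, rule pdom_diff[OF pdom_Var pdom_mono[OF pdom_Const lepm_0]])
  then show ?thesis by (simp only: sum_single_same)
qed

lemma lookup_Var_Const: "Poly_Mapping.lookup (Var k - Const r) (Poly_Mapping.single k 1) = 1"
  unfolding lookup_minus Var_def Const_def lookup_single using single_k1_ne0[of k] by (simp add: when_def)

lemma lookup_ffact: "Poly_Mapping.lookup (ffact_var k c) (Poly_Mapping.single k c) = 1"
proof -
  have "Poly_Mapping.lookup (ffact_var k c) (\<Sum>t<c. Poly_Mapping.single k 1) = 1"
    unfolding ffact_var_def
  proof (subst top_prod)
    show "(\<Prod>t<c. Poly_Mapping.lookup (Var k - Const (of_nat t)) (Poly_Mapping.single k 1)) = 1"
      by (simp only: lookup_Var_Const prod.neutral_const)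
  qed (simp, rule pdom_diff[OF pdom_Var pdom_mono[OF pdom_Const lepm_0]])
  then show ?thesis by (simp only: sum_single_same)
qed

lemma sum_single_keys: "(\<Sum>k\<in>Poly_Mapping.keys c. Poly_Mapping.single k (Poly_Mapping.lookup c k)) = c"
  by (rule poly_mapping_eqI) (auto simp: lookup_sum lookup_single when_def in_keys_iff)

lemma pdom_FF: "pdom c (FF c)"
proof -
  have "pdom (\<Sum>k\<in>Poly_Mapping.keys c. Poly_Mapping.single k (Poly_Mapping.lookup c k)) (FF c)"
    unfolding FF_def by (rule pdom_prod) (auto intro: pdom_ffact)
  then show ?thesis by (simp add: sum_single_keys)
qed

lemma lookup_FF: "Poly_Mapping.lookup (FF c) c = 1"
proof -
  have "Poly_Mapping.lookup (FF c) (\<Sum>k\<in>Poly_Mapping.keys c. Poly_Mapping.single k (Poly_Mapping.lookup c k)) = 1"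
    unfolding FF_def by (subst top_prod) (auto intro: pdom_ffact simp: lookup_ffact)
  then show ?thesis by (simp add: sum_single_keys)
qed

lemma lookup_down: "Poly_Mapping.lookup (down P) d = (\<Sum>c\<in>Poly_Mapping.keys P. Poly_Mapping.lookup P c * Poly_Mapping.lookup (FF c) d)"
  unfolding down_def FF_def by (simp add: lookup_sum lookup_Const_mult)

lemma lookup_ex: "Poly_Mapping.lookup (ex m \<alpha>) k = (if k \<in> {1..m} then count_list \<alpha> k else 0)"
  unfolding ex_def by (simp add: lookup_sum lookup_single when_def)

lemma partition_set: "is_partition m \<alpha> \<Longrightarrow> set \<alpha> \<subseteq> {1..m}"
  unfolding is_partition_def using member_le_sum_list[of _ \<alpha>] by fastforce

lemma partition_sum_count: "is_partition m \<alpha> \<Longrightarrow> (\<Sum>k\<in>{1..m}. count_list \<alpha> k * k) = m"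
  using sum_list_map_eq_sum_count2[OF partition_set, of m \<alpha> id, simplified]
  by (simp add: is_partition_def)

lemma W:
  assumes a: "is_partition m \<alpha>" and b: "is_partition m \<beta>" and le: "lepm (ex m \<alpha>) (ex m \<beta>)"
  shows "\<alpha> = \<beta>"
proof -
  have le': "count_list \<alpha> k * k \<le> count_list \<beta> k * k" if "k \<in> {1..m}" for k
    using le that unfolding lepm_def lookup_ex by (metis mult_le_mono1)
  have eq: "count_list \<alpha> k = count_list \<beta> k" for k
  proof (cases "k \<in> {1..m}")
    case True
    have s: "(\<Sum>k\<in>{1..m}. count_list \<alpha> k * k) = (\<Sum>k\<in>{1..m}. count_list \<beta> k * k)"
      using partition_sum_count[OF a] partition_sum_count[OF b] by simp
    have "count_list \<alpha> k * k = count_list \<beta> k * k"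
      by (rule sum_mono_inv[OF s le' True]) simp_all
    then show ?thesis using True by simp
  next
    case False
    then have "k \<notin> set \<alpha>" "k \<notin> set \<beta>" using partition_set[OF a] partition_set[OF b] by auto
    then show ?thesis by (simp add: count_list_0_iff)
  qed
  then have "mset \<alpha> = mset \<beta>" by (simp add: multiset_eq_iff count_mset)
  then have m: "mset (rev \<alpha>) = mset (rev \<beta>)" by simp
  have "sorted (rev \<alpha>)" "sorted (rev \<beta>)" using a b unfolding is_partition_def
    by (simp_all add: sorted_wrt_rev)
  then have "sort (rev \<beta>) = rev \<alpha>" "sort (rev \<beta>) = rev \<beta>"
    using properties_for_sort[OF m] properties_for_sort[of "rev \<beta>" "rev \<beta>"] by auto
  then show ?thesis by simp
qed

lemma sum_single_term: "finite A \<Longrightarrow> a \<in> A \<Longrightarrow> (\<And>x. x \<in> A \<Longrightarrow> x \<noteq> a \<Longrightarrow> f x = 0) \<Longrightarrow> sum f A = f a"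
  by (simp add: sum.remove sum.neutral)

lemma vars_S:
  assumes fin: "finite A"
  shows "vars (down (\<Sum>\<alpha>\<in>A. Const (q \<alpha>) * Ypol m \<alpha>)) \<subseteq> (\<Union>\<alpha>\<in>{\<alpha>\<in>A. q \<alpha> \<noteq> 0}. set \<alpha>)"
proof -
  have "vars (down (\<Sum>\<alpha>\<in>A. Const (q \<alpha>) * Ypol m \<alpha>)) \<subseteq> vars (\<Sum>\<alpha>\<in>A. Const (q \<alpha>) * Ypol m \<alpha>)"
    by (rule vars_down)
  also have "\<dots> \<subseteq> (\<Union>\<alpha>\<in>A. vars (Const (q \<alpha>) * Ypol m \<alpha>))" by (rule vars_sum)
  also have "\<dots> \<subseteq> (\<Union>\<alpha>\<in>{\<alpha>\<in>A. q \<alpha> \<noteq> 0}. set \<alpha>)"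
  proof (intro UN_least)
    fix \<alpha> assume "\<alpha> \<in> A"
    show "vars (Const (q \<alpha>) * Ypol m \<alpha>) \<subseteq> (\<Union>\<alpha>\<in>{\<alpha>\<in>A. q \<alpha> \<noteq> 0}. set \<alpha>)"
    proof (cases "q \<alpha> = 0")
      case True then show ?thesis by (simp add: Const_def)
    next
      case False
      have "vars (Const (q \<alpha>) * Ypol m \<alpha>) \<subseteq> vars (Ypol m \<alpha>)"
        using vars_mult vars_Const by blast
      also have "\<dots> \<subseteq> (\<Union>k\<in>{1..m}. vars (yk k ^ count_list \<alpha> k))"
        unfolding Ypol_def by (rule vars_prod)
      also have "\<dots> \<subseteq> set \<alpha>"
      proof (intro UN_least)
        fix k
        show "vars (yk k ^ count_list \<alpha> k) \<subseteq> set \<alpha>"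
        proof (cases "count_list \<alpha> k = 0")
          case True then show ?thesis by simp
        next
          case False
          then have "k \<in> set \<alpha>" by (simp add: count_list_0_iff)
          moreover have "vars (yk k ^ count_list \<alpha> k) \<subseteq> {k}"
            using vars_power[of "yk k"] vars_diff[of "Const (of_nat k) * Var k" 1]
              vars_mult[of "Const (of_nat k)" "Var k"] vars_Const vars_Var unfolding yk_def by fastforce
          ultimately show ?thesis by blast
        qed
      qed
      finally show ?thesis using \<open>\<alpha> \<in> A\<close> False by blast
    qed
  qed
  finally show ?thesis .
qed

lemma var_in_S:
  assumes fin: "finite A" and part: "\<And>\<alpha>. \<alpha> \<in> A \<Longrightarrow> is_partition m \<alpha>"
    and a0: "\<alpha>0 \<in> A" and q0: "q \<alpha>0 \<noteq> 0" and j: "j \<in> set \<alpha>0"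
  shows "j \<in> vars (down (\<Sum>\<alpha>\<in>A. Const (q \<alpha>) * Ypol m \<alpha>))"
proof -
  define S where "S = (\<Sum>\<alpha>\<in>A. Const (q \<alpha>) * Ypol m \<alpha>)"
  define d where "d = ex m \<alpha>0"
  have lookS: "Poly_Mapping.lookup S c = (\<Sum>\<alpha>\<in>A. q \<alpha> * Poly_Mapping.lookup (Ypol m \<alpha>) c)" for c
    unfolding S_def by (simp add: lookup_sum lookup_Const_mult)
  have inS: "\<exists>\<beta>\<in>A. lepm c (ex m \<beta>)" if "Poly_Mapping.lookup S c \<noteq> 0" for c
  proof -
    have "(\<Sum>\<alpha>\<in>A. q \<alpha> * Poly_Mapping.lookup (Ypol m \<alpha>) c) \<noteq> 0" using that lookS[of c] by argo
    then obtain \<beta> where b: "\<beta> \<in> A" "q \<beta> * Poly_Mapping.lookup (Ypol m \<beta>) c \<noteq> 0"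
      by (rule sum.not_neutral_contains_not_neutral)
    then have "Poly_Mapping.lookup (Ypol m \<beta>) c \<noteq> 0" by simp
    then have "lepm c (ex m \<beta>)" by (rule pdom_lookup[OF pdom_Ypol])
    then show ?thesis using b(1) by blast
  qed
  have lookSd: "Poly_Mapping.lookup S d = q \<alpha>0 * Poly_Mapping.lookup (Ypol m \<alpha>0) d"
    unfolding lookS
  proof (rule sum_single_term[OF fin a0])
    fix \<beta> assume b: "\<beta> \<in> A" "\<beta> \<noteq> \<alpha>0"
    show "q \<beta> * Poly_Mapping.lookup (Ypol m \<beta>) d = 0"
    proof (rule ccontr)
      assume "q \<beta> * Poly_Mapping.lookup (Ypol m \<beta>) d \<noteq> 0"
      then have "Poly_Mapping.lookup (Ypol m \<beta>) d \<noteq> 0" by simp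
      then have "lepm d (ex m \<beta>)" by (rule pdom_lookup[OF pdom_Ypol])
      then have "\<alpha>0 = \<beta>" unfolding d_def by (rule W[OF part[OF a0] part[OF b(1)]])
      then show False using b(2) by simp
    qed
  qed
  have Sd_ne: "Poly_Mapping.lookup S d \<noteq> 0"
    using lookSd q0 lookup_Ypol_ne0[of m \<alpha>0] d_def by simp
  have "Poly_Mapping.lookup (down S) d = Poly_Mapping.lookup S d * Poly_Mapping.lookup (FF d) d"
    unfolding lookup_down
  proof (rule sum_single_term)
    show "d \<in> Poly_Mapping.keys S" using Sd_ne by (simp add: in_keys_iff)
    fix c assume c: "c \<in> Poly_Mapping.keys S" "c \<noteq> d"
    show "Poly_Mapping.lookup S c * Poly_Mapping.lookup (FF c) d = 0"
    proof (rule ccontr)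
      assume "Poly_Mapping.lookup S c * Poly_Mapping.lookup (FF c) d \<noteq> 0"
      then have "Poly_Mapping.lookup (FF c) d \<noteq> 0" by simp
      then have dc: "lepm d c" by (rule pdom_lookup[OF pdom_FF])
      have "Poly_Mapping.lookup S c \<noteq> 0" using c(1) by (simp add: in_keys_iff)
      then obtain \<beta> where b: "\<beta> \<in> A" "lepm c (ex m \<beta>)" using inS by blast
      have "lepm d (ex m \<beta>)" by (rule lepm_trans[OF dc b(2)])
      then have "\<alpha>0 = \<beta>" unfolding d_def by (rule W[OF part[OF a0] part[OF b(1)]])
      then have "lepm c d" using b(2) d_def by simp
      then have "c = d" using dc by (rule lepm_antisym)
      then show False using c(2) by simp
    qed
  qed simp
  then have "Poly_Mapping.lookup (down S) d \<noteq> 0" using Sd_ne lookup_FF[of d] by simp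
  moreover have "Poly_Mapping.lookup d j \<noteq> 0"
  proof -
    have "j \<in> {1..m}" using j partition_set[OF part[OF a0]] by blast
    moreover have "count_list \<alpha>0 j \<noteq> 0" using j by (simp add: count_list_0_iff)
    ultimately show ?thesis unfolding d_def lookup_ex by simp
  qed
  ultimately show ?thesis unfolding S_def[symmetric] vars_def by (auto simp: in_keys_iff)
qed



definition ok :: "nat list \<Rightarrow> nat list \<Rightarrow> (nat \<Rightarrow> nat) \<Rightarrow> (nat \<Rightarrow> nat) \<Rightarrow> bool" where
  "ok mu alpha \<sigma> f \<longleftrightarrow> (\<forall>i<length mu. mu ! i + (length mu - 1 - i) =
                  (length mu - 1 - \<sigma> i) + (\<Sum>k\<in>{k. k < length alpha \<and> f k = i}. alpha ! k))"

definition Fs :: "nat list \<Rightarrow> nat list \<Rightarrow> (nat \<Rightarrow> nat) \<Rightarrow> (nat \<Rightarrow> nat) set" where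
  "Fs mu alpha \<sigma> = {f \<in> {0..<length alpha} \<rightarrow>\<^sub>E {0..<length mu}. ok mu alpha \<sigma> f}"

lemma character_Fs: "character mu alpha =
   (\<Sum>\<sigma>\<in>{\<sigma>. \<sigma> permutes {0..<length mu}}. sign \<sigma> * int (card (Fs mu alpha \<sigma>)))"
  unfolding character_def Fs_def ok_def Let_def by simp

definition Q :: "nat list \<Rightarrow> nat list \<Rightarrow> bool" where
  "Q mu alpha \<longleftrightarrow> (\<exists>\<sigma> f. \<sigma> permutes {0..<length mu} \<and> f \<in> Fs mu alpha \<sigma>) \<and>
     (\<forall>\<sigma>1 \<sigma>2 f1 f2. \<sigma>1 permutes {0..<length mu} \<and> f1 \<in> Fs mu alpha \<sigma>1 \<and>
                     \<sigma>2 permutes {0..<length mu} \<and> f2 \<in> Fs mu alpha \<sigma>2 \<longrightarrow> \<sigma>1 = \<sigma>2)"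

lemma finite_Fs: "finite (Fs mu alpha \<sigma>)"
  unfolding Fs_def
  by (rule finite_subset[OF _ finite_PiE[of "{0..<length alpha}" "\<lambda>_. {0..<length mu}"]]) auto

lemma Q_char: assumes "Q mu alpha" shows "character mu alpha \<noteq> 0"
proof -
  obtain \<sigma>0 f0 where s0: "\<sigma>0 permutes {0..<length mu}" "f0 \<in> Fs mu alpha \<sigma>0"
    using assms unfolding Q_def by blast
  have uni: "Fs mu alpha \<sigma> = {}" if "\<sigma> permutes {0..<length mu}" "\<sigma> \<noteq> \<sigma>0" for \<sigma>
    using assms s0 that unfolding Q_def by blast
  have "character mu alpha = sign \<sigma>0 * int (card (Fs mu alpha \<sigma>0))"
    unfolding character_Fs
    by (rule sum.remove[OF finite_permutations, THEN trans]) (use s0 uni in auto)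
  moreover have "card (Fs mu alpha \<sigma>0) \<noteq> 0" using s0(2) finite_Fs by auto
  moreover have "sign \<sigma>0 \<noteq> 0" by (simp add: sign_def)
  ultimately show ?thesis by simp
qed

lemma vanish:
  assumes sorted: "sorted_wrt (\<ge>) mu" and x: "x \<in> set alpha" and ne: "character mu alpha \<noteq> 0"
  shows "mu \<noteq> [] \<and> x \<le> hd mu + length mu - 1"
proof -
  obtain k0 where k0: "k0 < length alpha" "alpha ! k0 = x" using x by (meson in_set_conv_nth)
  have "\<exists>\<sigma>. \<sigma> permutes {0..<length mu} \<and> Fs mu alpha \<sigma> \<noteq> {}"
  proof (rule ccontr)
    assume "\<not> ?thesis"
    then have "character mu alpha = 0" unfolding character_Fs by (intro sum.neutral) auto
    then show False using ne by simp
  qed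
  then obtain \<sigma> f where sf: "\<sigma> permutes {0..<length mu}" "f \<in> Fs mu alpha \<sigma>" by blast
  define i where "i = f k0"
  have i: "i < length mu" using sf(2) k0(1) unfolding Fs_def i_def by (auto simp: PiE_iff)
  then have ne: "mu \<noteq> []" by auto
  have eq: "mu ! i + (length mu - 1 - i) = (length mu - 1 - \<sigma> i) + (\<Sum>k\<in>{k. k < length alpha \<and> f k = i}. alpha ! k)"
    using sf(2) i unfolding Fs_def ok_def by blast
  have "alpha ! k0 \<le> (\<Sum>k\<in>{k. k < length alpha \<and> f k = i}. alpha ! k)"
    by (rule member_le_sum) (use k0 i_def in auto)
  moreover have "mu ! i \<le> mu ! 0"
  proof (cases i)
    case (Suc j) then show ?thesis using sorted i by (simp add: sorted_wrt_iff_nth_less)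
  qed simp
  ultimately have "x \<le> mu ! 0 + (length mu - 1)" using eq k0(2) by linarith
  then show ?thesis using ne by (cases mu) auto
qed

lemma mk_perm:
  assumes "finite S" "inj_on p S" "p ` S \<subseteq> S" "\<And>x. x \<notin> S \<Longrightarrow> p x = x"
  shows "p permutes S"
  using assms by (intro bij_imp_permutes bij_betw_imageI endo_inj_surj) auto

lemma sum_pos_empty:
  assumes "finite K" "(\<Sum>k\<in>K. (alpha::nat list) ! k) = 0" "\<forall>k\<in>K. 0 < alpha ! k"
  shows "K = {}"
  using assms by auto

lemma Fs_append0:
  assumes pos: "\<forall>x\<in>set alpha. 0 < x"
  shows "(\<sigma> permutes {0..<Suc (length mu)} \<and> f \<in> Fs (mu @ [0]) alpha \<sigma>) \<longleftrightarrow>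
         (\<sigma> permutes {0..<length mu} \<and> f \<in> Fs mu alpha \<sigma>)"
proof -
  let ?l = "length mu" and ?L = "length alpha"
  let ?S = "\<lambda>f i. (\<Sum>k\<in>{k. k < ?L \<and> f k = i}. alpha ! k)"
  have posk: "\<forall>k\<in>{k. k < ?L \<and> f k = i}. 0 < alpha ! k" for i using pos by auto
  have rows: "(mu @ [0]) ! i + (length (mu @ [0]) - 1 - i) = (length (mu @ [0]) - 1 - \<sigma> i) + ?S f i
          \<longleftrightarrow> mu ! i + (?l - 1 - i) = (?l - 1 - \<sigma> i) + ?S f i"
    if "i < ?l" "\<sigma> i < ?l" for i
    using that by (simp add: nth_append) arith
  show ?thesis
  proof
    assume A: "\<sigma> permutes {0..<Suc ?l} \<and> f \<in> Fs (mu @ [0]) alpha \<sigma>"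
    then have f: "f \<in> {0..<?L} \<rightarrow>\<^sub>E {0..<Suc ?l}" and okA: "ok (mu @ [0]) alpha \<sigma> f"
      unfolding Fs_def by auto
    have rowl: "(mu @ [0]) ! ?l + (length (mu @ [0]) - 1 - ?l) = (length (mu @ [0]) - 1 - \<sigma> ?l) + ?S f ?l"
      using okA[unfolded ok_def, rule_format, of ?l] by simp
    then have "?l - \<sigma> ?l = 0" "?S f ?l = 0" by simp_all
    moreover have "\<sigma> ?l < Suc ?l" using A permutes_in_image[of \<sigma> "{0..<Suc ?l}" ?l] by auto
    ultimately have sl: "\<sigma> ?l = ?l" by simp
    have nol: "{k. k < ?L \<and> f k = ?l} = {}" using sum_pos_empty[OF _ \<open>?S f ?l = 0\<close> posk] by simp
    have sp: "\<sigma> permutes {0..<?l}"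
    proof (rule mk_perm)
      show "inj_on \<sigma> {0..<?l}" using A permutes_inj_on by blast
      show "\<sigma> ` {0..<?l} \<subseteq> {0..<?l}"
      proof
        fix y assume "y \<in> \<sigma> ` {0..<?l}"
        then obtain i where i: "i < ?l" "y = \<sigma> i" by auto
        have "\<sigma> i < Suc ?l" using A permutes_in_image[of \<sigma> "{0..<Suc ?l}" i] i by auto
        moreover have "\<sigma> i \<noteq> ?l" using sl i A permutes_inj[of \<sigma>] by (metis less_irrefl injD)
        ultimately show "y \<in> {0..<?l}" using i by auto
      qed
      show "\<sigma> x = x" if "x \<notin> {0..<?l}" for x
        using that sl A permutes_not_in[of \<sigma> "{0..<Suc ?l}" x] by (cases "x = ?l") auto
    qed simp
    have f': "f \<in> {0..<?L} \<rightarrow>\<^sub>E {0..<?l}"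
      using f nol by (auto simp: PiE_iff less_Suc_eq)
    have "ok mu alpha \<sigma> f" unfolding ok_def
    proof (intro allI impI)
      fix i assume i: "i < ?l"
      have "\<sigma> i < ?l" using sp permutes_in_image[of \<sigma> "{0..<?l}" i] i by auto
      then show "mu ! i + (?l - 1 - i) = (?l - 1 - \<sigma> i) + ?S f i"
        using okA i rows[of i] unfolding ok_def by simp
    qed
    then show "\<sigma> permutes {0..<?l} \<and> f \<in> Fs mu alpha \<sigma>" using sp f' unfolding Fs_def by simp
  next
    assume A: "\<sigma> permutes {0..<?l} \<and> f \<in> Fs mu alpha \<sigma>"
    then have f: "f \<in> {0..<?L} \<rightarrow>\<^sub>E {0..<?l}" and okA: "ok mu alpha \<sigma> f"
      unfolding Fs_def by auto
    have sp: "\<sigma> permutes {0..<Suc ?l}" using A by (auto intro: permutes_subset)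
    have sl: "\<sigma> ?l = ?l" using A permutes_not_in by fastforce
    have f': "f \<in> {0..<?L} \<rightarrow>\<^sub>E {0..<Suc ?l}" using f by (auto simp: PiE_iff)
    have fl: "f k < ?l" if "k < ?L" for k using f that by (auto simp: PiE_iff)
    have nol: "{k. k < ?L \<and> f k = ?l} = {}" using fl by (metis (mono_tags, lifting) empty_Collect_eq less_irrefl)
    have "ok (mu @ [0]) alpha \<sigma> f" unfolding ok_def
    proof (intro allI impI)
      fix i assume i: "i < length (mu @ [0])"
      show "(mu @ [0]) ! i + (length (mu @ [0]) - 1 - i) = (length (mu @ [0]) - 1 - \<sigma> i) + ?S f i"
      proof (cases "i = ?l")
        case True then show ?thesis using sl nol by (simp only: sum.empty) simp
      next
        case False
        then have i': "i < ?l" using i by simp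
        have "\<sigma> i < ?l" using A permutes_in_image[of \<sigma> "{0..<?l}" i] i' by auto
        then show ?thesis using okA i' rows[of i] unfolding ok_def by simp
      qed
    qed
    then show "\<sigma> permutes {0..<Suc ?l} \<and> f \<in> Fs (mu @ [0]) alpha \<sigma>" using sp f' unfolding Fs_def by simp
  qed
qed

lemma Q_append0:
  assumes pos: "\<forall>x\<in>set alpha. 0 < x" and q: "Q mu alpha"
  shows "Q (mu @ [0]) alpha"
proof -
  have E: "(\<sigma> permutes {0..<length (mu @ [0])} \<and> f \<in> Fs (mu @ [0]) alpha \<sigma>) \<longleftrightarrow>
         (\<sigma> permutes {0..<length mu} \<and> f \<in> Fs mu alpha \<sigma>)" for \<sigma> f
    using Fs_append0[OF pos, of \<sigma> mu f] by simp
  show ?thesis unfolding Q_def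
  proof (intro conjI allI impI)
    show "\<exists>\<sigma> f. \<sigma> permutes {0..<length (mu @ [0])} \<and> f \<in> Fs (mu @ [0]) alpha \<sigma>"
      using q E unfolding Q_def by blast
    fix \<sigma>1 \<sigma>2 f1 f2
    assume H: "\<sigma>1 permutes {0..<length (mu @ [0])} \<and> f1 \<in> Fs (mu @ [0]) alpha \<sigma>1 \<and>
       \<sigma>2 permutes {0..<length (mu @ [0])} \<and> f2 \<in> Fs (mu @ [0]) alpha \<sigma>2"
    then have "\<sigma>1 permutes {0..<length mu} \<and> f1 \<in> Fs mu alpha \<sigma>1"
      "\<sigma>2 permutes {0..<length mu} \<and> f2 \<in> Fs mu alpha \<sigma>2" using E by blast+
    then show "\<sigma>1 = \<sigma>2" using q unfolding Q_def by blast
  qed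
qed

lemma Q_append_zeros:
  assumes pos: "\<forall>x\<in>set alpha. 0 < x" and q: "Q mu alpha"
  shows "Q (mu @ replicate z 0) alpha"
proof (induction z)
  case 0 then show ?case using q by simp
next
  case (Suc z)
  have "Q ((mu @ replicate z 0) @ [0]) alpha" by (rule Q_append0[OF pos Suc])
  then show ?case by (simp add: replicate_append_same[symmetric])
qed



lemma ok_cons:
  fixes a :: nat and mu' alpha' :: "nat list"
  assumes ge1: "\<forall>x\<in>set mu'. 1 \<le> x"
    and s0: "\<sigma> 0 = length mu'" and sS: "\<forall>j<length mu'. \<sigma> (Suc j) = \<tau> j \<and> \<tau> j < length mu'"
    and f0: "f 0 = 0" and fS: "\<forall>k<length alpha'. f (Suc k) = Suc (g k)"
  shows "ok (a # mu') ((a + length mu') # alpha') \<sigma> f \<longleftrightarrow> ok (map (\<lambda>x. x - 1) mu') alpha' \<tau> g"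
proof -
  define l' where "l' = length mu'"
  define L' where "L' = length alpha'"
  define al where "al = (a + length mu') # alpha'"
  have setS: "{k. k < length al \<and> f k = Suc j} = Suc ` {k. k < L' \<and> g k = j}" for j
  proof (intro set_eqI iffI)
    fix k assume k: "k \<in> {k. k < length al \<and> f k = Suc j}"
    then have "k \<noteq> 0" using f0 by (metis (mono_tags) mem_Collect_eq nat.distinct(1))
    then obtain k' where "k = Suc k'" by (cases k) auto
    then show "k \<in> Suc ` {k. k < L' \<and> g k = j}" using k fS unfolding al_def L'_def by auto
  next
    fix k assume "k \<in> Suc ` {k. k < L' \<and> g k = j}"
    then show "k \<in> {k. k < length al \<and> f k = Suc j}" using fS unfolding al_def L'_def by auto
  qed
  have sumS: "(\<Sum>k\<in>{k. k < length al \<and> f k = Suc j}. al ! k) = (\<Sum>k\<in>{k. k < L' \<and> g k = j}. alpha' ! k)" for j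
    unfolding setS by (subst sum.reindex) (auto simp: al_def)
  have set0: "{k. k < length al \<and> f k = 0} = {0}"
  proof (intro set_eqI iffI)
    fix k assume k: "k \<in> {k. k < length al \<and> f k = 0}"
    show "k \<in> {0}"
    proof (cases k)
      case (Suc k') then show ?thesis using k fS unfolding al_def by auto
    qed simp
  qed (auto simp: al_def f0)
  have row0: "(a # mu') ! 0 + (length (a # mu') - 1 - 0) = (length (a # mu') - 1 - \<sigma> 0) +
      (\<Sum>k\<in>{k. k < length al \<and> f k = 0}. al ! k)"
    unfolding set0 using s0 by (simp add: al_def)
  have rowS: "((a # mu') ! Suc j + (length (a # mu') - 1 - Suc j) = (length (a # mu') - 1 - \<sigma> (Suc j)) +
      (\<Sum>k\<in>{k. k < length al \<and> f k = Suc j}. al ! k)) \<longleftrightarrow>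
      ((map (\<lambda>x. x - 1) mu') ! j + (length (map (\<lambda>x. x - 1) mu') - 1 - j) = (length (map (\<lambda>x. x - 1) mu') - 1 - \<tau> j) +
      (\<Sum>k\<in>{k. k < length alpha' \<and> g k = j}. alpha' ! k))" if j: "j < l'" for j
  proof -
    have "mu' ! j \<ge> 1" using ge1 j unfolding l'_def by auto
    moreover have "\<sigma> (Suc j) = \<tau> j" "\<tau> j < l'" using sS j unfolding l'_def by auto
    ultimately show ?thesis using j unfolding sumS L'_def l'_def by simp arith
  qed
  show ?thesis unfolding al_def[symmetric]
  proof
    assume A: "ok (a # mu') al \<sigma> f"
    show "ok (map (\<lambda>x. x - 1) mu') alpha' \<tau> g" unfolding ok_def
    proof (intro allI impI)
      fix j assume j: "j < length (map (\<lambda>x. x - 1) mu')"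
      then have j': "j < l'" "Suc j < length (a # mu')" unfolding l'_def by auto
      show "(map (\<lambda>x. x - 1) mu') ! j + (length (map (\<lambda>x. x - 1) mu') - 1 - j) = (length (map (\<lambda>x. x - 1) mu') - 1 - \<tau> j) +
      (\<Sum>k\<in>{k. k < length alpha' \<and> g k = j}. alpha' ! k)"
        using A[unfolded ok_def, rule_format, OF j'(2)] rowS[OF j'(1)] by blast
    qed
  next
    assume A: "ok (map (\<lambda>x. x - 1) mu') alpha' \<tau> g"
    show "ok (a # mu') al \<sigma> f" unfolding ok_def
    proof (intro allI impI)
      fix i assume i: "i < length (a # mu')"
      show "(a # mu') ! i + (length (a # mu') - 1 - i) = (length (a # mu') - 1 - \<sigma> i) +
      (\<Sum>k\<in>{k. k < length al \<and> f k = i}. al ! k)"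
      proof (cases i)
        case 0 then show ?thesis using row0 by simp
      next
        case (Suc j)
        then have j': "j < l'" "j < length (map (\<lambda>x. x - 1) mu')" using i unfolding l'_def by auto
        show ?thesis unfolding Suc
          using A[unfolded ok_def, rule_format, OF j'(2)] rowS[OF j'(1)] by blast
      qed
    qed
  qed
qed

lemma forced:
  fixes a :: nat and mu' alpha' :: "nat list"
  assumes ge1: "\<forall>x\<in>set mu'. 1 \<le> x \<and> x \<le> a" and pos: "\<forall>x\<in>set alpha'. 0 < x"
    and sp: "\<sigma> permutes {0..<Suc (length mu')}"
    and f: "f \<in> Fs (a # mu') ((a + length mu') # alpha') \<sigma>"
  shows "\<sigma> 0 = length mu' \<and> f 0 = 0 \<and> (\<forall>k. 0 < k \<and> k < Suc (length alpha') \<longrightarrow> f k \<noteq> 0)"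
proof -
  define l' where "l' = length mu'"
  define al where "al = (a + length mu') # alpha'"
  define i0 where "i0 = f 0"
  define K where "K = {k. k < length al \<and> f k = i0}"
  have fP: "f \<in> {0..<length al} \<rightarrow>\<^sub>E {0..<length (a # mu')}" and okA: "ok (a # mu') al \<sigma> f"
    using f unfolding Fs_def al_def by auto
  have i0: "i0 < Suc l'" using fP unfolding i0_def l'_def al_def by (auto simp: PiE_iff)
  have eq: "(a # mu') ! i0 + (length (a # mu') - 1 - i0) = (length (a # mu') - 1 - \<sigma> i0) + sum ((!) al) K"
    using okA[unfolded ok_def, rule_format, of i0] i0 unfolding K_def l'_def by simp
  have finK: "finite K" unfolding K_def by simp
  have "0 \<in> K" unfolding K_def i0_def al_def by simp
  then have sumK: "sum ((!) al) K = al ! 0 + sum ((!) al) (K - {0})"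
    using finK by (simp add: sum.remove)
  have le: "(a # mu') ! i0 \<le> a"
  proof (cases i0)
    case (Suc j) then show ?thesis using ge1 i0 unfolding l'_def by auto
  qed simp
  have s_lt: "\<sigma> i0 < Suc l'" using sp i0 permutes_in_image[of \<sigma> "{0..<Suc l'}" i0] unfolding l'_def by auto
  have al0: "al ! 0 = a + l'" unfolding al_def l'_def by simp
  from eq sumK le al0 have "i0 = 0 \<and> \<sigma> i0 = l' \<and> sum ((!) al) (K - {0}) = 0"
    unfolding l'_def[symmetric] using i0 s_lt by simp linarith
  then have r: "i0 = 0" "\<sigma> 0 = l'" "sum ((!) al) (K - {0}) = 0" by auto
  have "K - {0} = {}"
  proof (rule ccontr)
    assume "K - {0} \<noteq> {}"
    then obtain k where k: "k \<in> K" "k \<noteq> 0" by auto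
    then obtain k' where k': "k = Suc k'" by (cases k) auto
    then have "k' < length alpha'" using k unfolding K_def al_def by auto
    then have "al ! k > 0" using pos k' unfolding al_def by simp
    moreover have "al ! k \<le> sum ((!) al) (K - {0})"
      by (rule member_le_sum) (use k finK in auto)
    ultimately show False using r(3) by simp
  qed
  then have "f k \<noteq> 0" if "0 < k" "k < Suc (length alpha')" for k
    using that r(1) unfolding K_def al_def i0_def by auto
  then show ?thesis using r unfolding i0_def l'_def by auto
qed

lemma Q_cons:
  fixes a :: nat and mu' alpha' :: "nat list"
  assumes ge1: "\<forall>x\<in>set mu'. 1 \<le> x \<and> x \<le> a" and pos: "\<forall>x\<in>set alpha'. 0 < x"
    and q: "Q (map (\<lambda>x. x - 1) mu') alpha'"
  shows "Q (a # mu') ((a + length mu') # alpha')"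
proof -
  define l' where "l' = length mu'"
  define L' where "L' = length alpha'"
  define nu where "nu = map (\<lambda>x. x - 1) mu'"
  have ge1': "\<forall>x\<in>set mu'. 1 \<le> x" using ge1 by auto
  have exi: "\<exists>\<sigma> f. \<sigma> permutes {0..<length (a # mu')} \<and> f \<in> Fs (a # mu') ((a + length mu') # alpha') \<sigma>"
  proof -
    obtain \<tau> g where tg: "\<tau> permutes {0..<l'}" "g \<in> Fs nu alpha' \<tau>"
      using q unfolding Q_def nu_def l'_def by auto
    have tl: "\<tau> j < l'" if "j < l'" for j using tg(1) permutes_in_image[of \<tau> "{0..<l'}" j] that by auto
    have gP: "g \<in> {0..<L'} \<rightarrow>\<^sub>E {0..<l'}" and okg: "ok nu alpha' \<tau> g"
      using tg(2) unfolding Fs_def nu_def L'_def l'_def by auto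
    define \<sigma> where "\<sigma> = (\<lambda>i. if i = 0 then l' else if i \<le> l' then \<tau> (i - 1) else i)"
    define f where "f = (\<lambda>k. if k = 0 then 0 else if k < Suc L' then Suc (g (k - 1)) else undefined)"
    have sp: "\<sigma> permutes {0..<Suc l'}"
    proof (rule mk_perm)
      show "inj_on \<sigma> {0..<Suc l'}"
      proof (rule inj_onI)
        fix i j assume ij: "i \<in> {0..<Suc l'}" "j \<in> {0..<Suc l'}" "\<sigma> i = \<sigma> j"
        show "i = j"
        proof -
          have A: "\<sigma> k = l' \<longleftrightarrow> k = 0" if "k < Suc l'" for k
          proof (cases k)
            case (Suc k')
            then have "k' < l'" using that by simp
            then have "\<tau> k' < l'" by (rule tl)
            then show ?thesis using Suc that unfolding \<sigma>_def by auto
          qed (simp add: \<sigma>_def)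
          show "i = j"
          proof (cases "i = 0 \<or> j = 0")
            case True then show ?thesis using A[of i] A[of j] ij by auto
          next
            case False
            then have "\<tau> (i - 1) = \<tau> (j - 1)" using ij unfolding \<sigma>_def by auto
            then have "i - 1 = j - 1" using permutes_inj[OF tg(1)] by (auto dest: injD)
            then show ?thesis using False by linarith
          qed
        qed
      qed
      show "\<sigma> ` {0..<Suc l'} \<subseteq> {0..<Suc l'}"
      proof
        fix y assume "y \<in> \<sigma> ` {0..<Suc l'}"
        then obtain i where i: "i < Suc l'" "y = \<sigma> i" by auto
        show "y \<in> {0..<Suc l'}"
        proof (cases i)
          case (Suc k)
          then have "k < l'" using i by simp
          then have "\<tau> k < l'" by (rule tl)
          then show ?thesis using i Suc unfolding \<sigma>_def by auto
        qed (use i in \<open>simp add: \<sigma>_def\<close>)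
      qed
      show "\<sigma> x = x" if "x \<notin> {0..<Suc l'}" for x using that unfolding \<sigma>_def by auto
    qed simp
    have fP: "f \<in> {0..<Suc L'} \<rightarrow>\<^sub>E {0..<Suc l'}"
      using gP unfolding f_def by (auto simp: PiE_iff extensional_def)
    have "ok (a # mu') ((a + length mu') # alpha') \<sigma> f"
    proof (subst ok_cons[OF ge1'])
      show "\<sigma> 0 = length mu'" unfolding \<sigma>_def l'_def by simp
      show "\<forall>j<length mu'. \<sigma> (Suc j) = \<tau> j \<and> \<tau> j < length mu'" using tl unfolding \<sigma>_def l'_def by auto
      show "f 0 = 0" unfolding f_def by simp
      show "\<forall>k<length alpha'. f (Suc k) = Suc (g k)" unfolding f_def L'_def by auto
      show "ok (map (\<lambda>x. x - 1) mu') alpha' \<tau> g" using okg unfolding nu_def .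
    qed
    then have "f \<in> Fs (a # mu') ((a + length mu') # alpha') \<sigma>"
      using fP unfolding Fs_def L'_def l'_def by simp
    then show ?thesis using sp unfolding l'_def by auto
  qed
  have red: "\<exists>\<tau> g. \<tau> permutes {0..<l'} \<and> g \<in> Fs nu alpha' \<tau> \<and> (\<forall>j<l'. \<sigma> (Suc j) = \<tau> j)"
    if sf: "\<sigma> permutes {0..<Suc l'}" "f \<in> Fs (a # mu') ((a + length mu') # alpha') \<sigma>" for \<sigma> f
  proof -
    have fo: "\<sigma> 0 = l'" "f 0 = 0" "\<forall>k. 0 < k \<and> k < Suc L' \<longrightarrow> f k \<noteq> 0"
      using forced[OF ge1 pos sf(1)[unfolded l'_def] sf(2)] unfolding l'_def L'_def by auto
    have fP: "f \<in> {0..<Suc L'} \<rightarrow>\<^sub>E {0..<Suc l'}" and okf: "ok (a # mu') ((a + length mu') # alpha') \<sigma> f"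
      using sf(2) unfolding Fs_def L'_def l'_def by auto
    define \<tau> where "\<tau> = (\<lambda>j. if j < l' then \<sigma> (Suc j) else j)"
    define g where "g = (\<lambda>k. if k < L' then f (Suc k) - 1 else undefined)"
    have sl: "\<sigma> i < Suc l'" if "i < Suc l'" for i using sf(1) permutes_in_image[of \<sigma> "{0..<Suc l'}" i] that by auto
    have sne: "\<sigma> (Suc j) \<noteq> l'" for j using fo(1) permutes_inj[OF sf(1)] by (metis injD nat.distinct(1))
    have tl: "\<tau> j < l'" if "j < l'" for j using sl[of "Suc j"] sne[of j] that unfolding \<tau>_def by auto
    have tp: "\<tau> permutes {0..<l'}"
    proof (rule mk_perm)
      show "inj_on \<tau> {0..<l'}"
        using permutes_inj[OF sf(1)] unfolding \<tau>_def by (auto simp: inj_on_def dest: injD)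
      show "\<tau> ` {0..<l'} \<subseteq> {0..<l'}" using tl by auto
      show "\<tau> x = x" if "x \<notin> {0..<l'}" for x using that unfolding \<tau>_def by auto
    qed simp
    have fS: "f (Suc k) = Suc (g k)" if "k < L'" for k
    proof -
      have "f (Suc k) \<noteq> 0" using fo(3) that by auto
      then show ?thesis unfolding g_def using that by auto
    qed
    have gP: "g \<in> {0..<L'} \<rightarrow>\<^sub>E {0..<l'}"
    proof -
      have "g k < l'" if "k < L'" for k
      proof -
        have "f (Suc k) < Suc l'" using fP that by (auto simp: PiE_iff)
        then show ?thesis using fS[OF that] by simp
      qed
      then show ?thesis unfolding g_def by (auto simp: PiE_iff extensional_def)
    qed
    have "ok (map (\<lambda>x. x - 1) mu') alpha' \<tau> g"
    proof (subst ok_cons[OF ge1', symmetric])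
      show "\<sigma> 0 = length mu'" using fo unfolding l'_def by simp
      show "\<forall>j<length mu'. \<sigma> (Suc j) = \<tau> j \<and> \<tau> j < length mu'" using tl unfolding \<tau>_def l'_def by auto
      show "f 0 = 0" using fo by simp
      show "\<forall>k<length alpha'. f (Suc k) = Suc (g k)" using fS unfolding L'_def by auto
      show "ok (a # mu') ((a + length mu') # alpha') \<sigma> f" by (rule okf)
    qed
    then have "g \<in> Fs nu alpha' \<tau>" using gP unfolding Fs_def nu_def L'_def l'_def by simp
    then show ?thesis using tp unfolding \<tau>_def by auto
  qed
  show ?thesis unfolding Q_def
  proof (intro conjI allI impI)
    show "\<exists>\<sigma> f. \<sigma> permutes {0..<length (a # mu')} \<and> f \<in> Fs (a # mu') ((a + length mu') # alpha') \<sigma>"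
      by (rule exi)
    fix \<sigma>1 \<sigma>2 f1 f2
    assume H: "\<sigma>1 permutes {0..<length (a # mu')} \<and> f1 \<in> Fs (a # mu') ((a + length mu') # alpha') \<sigma>1 \<and>
       \<sigma>2 permutes {0..<length (a # mu')} \<and> f2 \<in> Fs (a # mu') ((a + length mu') # alpha') \<sigma>2"
    then have p1: "\<sigma>1 permutes {0..<Suc l'}" and p2: "\<sigma>2 permutes {0..<Suc l'}" unfolding l'_def by auto
    obtain \<tau>1 g1 where t1: "\<tau>1 permutes {0..<l'}" "g1 \<in> Fs nu alpha' \<tau>1" "\<forall>j<l'. \<sigma>1 (Suc j) = \<tau>1 j"
      using red[OF p1] H by blast
    obtain \<tau>2 g2 where t2: "\<tau>2 permutes {0..<l'}" "g2 \<in> Fs nu alpha' \<tau>2" "\<forall>j<l'. \<sigma>2 (Suc j) = \<tau>2 j"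
      using red[OF p2] H by blast
    have "\<tau>1 = \<tau>2" using q t1(1,2) t2(1,2) unfolding Q_def nu_def l'_def length_map by blast
    have z1: "\<sigma>1 0 = l'" and z2: "\<sigma>2 0 = l'"
      using forced[OF ge1 pos] H unfolding l'_def by auto
    show "\<sigma>1 = \<sigma>2"
    proof
      fix i show "\<sigma>1 i = \<sigma>2 i"
      proof (cases i)
        case 0 then show ?thesis using z1 z2 by simp
      next
        case (Suc j)
        show ?thesis
        proof (cases "j < l'")
          case True then show ?thesis using Suc t1(3) t2(3) \<open>\<tau>1 = \<tau>2\<close> by simp
        next
          case False
          then have "i \<notin> {0..<Suc l'}" using Suc by auto
          then show ?thesis using permutes_not_in[OF p1] permutes_not_in[OF p2] by simp
        qed
      qed
    qed
  qed
qed



lemma sorted_dropWhile_zero: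
  fixes xs :: "nat list"
  assumes "sorted_wrt (\<ge>) xs"
  shows "dropWhile (\<lambda>x. 0 < x) xs = replicate (length (dropWhile (\<lambda>x. 0 < x) xs)) 0"
proof -
  let ?d = "dropWhile (\<lambda>x. 0 < x) xs"
  have s: "sorted_wrt (\<ge>) ?d"
    using assms by (metis sorted_wrt_append takeWhile_dropWhile_id)
  have "\<forall>y\<in>set ?d. y = 0"
  proof (cases ?d)
    case (Cons b bs)
    then have "b = 0" using hd_dropWhile[of "\<lambda>x. 0 < x" xs] by simp
    then show ?thesis using s Cons by auto
  next
    case Nil then show ?thesis by (simp only: list.set(1) ball_empty)
  qed
  then show ?thesis by (simp add: replicate_length_same)
qed

lemma sum_list_minus1: "\<forall>x\<in>set xs. (1::nat) \<le> x \<Longrightarrow> sum_list (map (\<lambda>x. x - 1) xs) + length xs = sum_list xs"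
  by (induction xs) auto

lemma partition_nil: "is_partition 0 alpha \<Longrightarrow> alpha = []"
  unfolding is_partition_def by (cases alpha) auto

lemma Q_nil: "Q [] []"
  unfolding Q_def Fs_def ok_def by simp

lemma exists_Q:
  "sorted_wrt (\<ge>) mu \<Longrightarrow> \<forall>x\<in>set mu. 0 < x \<Longrightarrow>
   \<exists>alpha. is_partition (sum_list mu) alpha \<and> Q mu alpha \<and> (mu \<noteq> [] \<longrightarrow> hd alpha = hd mu + length mu - 1)"
proof (induction "sum_list mu" arbitrary: mu rule: less_induct)
  case less
  show ?case
  proof (cases mu)
    case Nil
    then show ?thesis using Q_nil by (intro exI[of _ "[]"]) (simp add: is_partition_def)
  next
    case (Cons a mu')
    have apos: "0 < a" using less.prems Cons by simp
    have ge1: "\<forall>x\<in>set mu'. 1 \<le> x \<and> x \<le> a" using less.prems Cons by auto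
    have smu': "sorted_wrt (\<ge>) mu'" using less.prems Cons by simp
    define nu0 where "nu0 = map (\<lambda>x. x - 1) mu'"
    define nu where "nu = takeWhile (\<lambda>x. 0 < x) nu0"
    define z where "z = length (dropWhile (\<lambda>x. 0 < x) nu0)"
    have snu0: "sorted_wrt (\<ge>) nu0" unfolding nu0_def sorted_wrt_map
      by (rule sorted_wrt_mono_rel[OF _ smu']) auto
    have nu0_eq: "nu0 = nu @ replicate z 0"
      unfolding nu_def z_def using sorted_dropWhile_zero[OF snu0] takeWhile_dropWhile_id[of "\<lambda>x. 0 < x" nu0]
      by metis
    have snu: "sorted_wrt (\<ge>) nu" unfolding nu_def
      by (metis snu0 sorted_wrt_take takeWhile_eq_take)
    have pnu: "\<forall>x\<in>set nu. 0 < x" unfolding nu_def by (auto dest: set_takeWhileD)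
    have sum_nu: "sum_list nu = sum_list nu0" using nu0_eq by simp
    have sum_nu0: "sum_list nu0 + length mu' = sum_list mu'"
      unfolding nu0_def using ge1 sum_list_minus1[of mu'] by auto
    have "sum_list nu < sum_list mu" using sum_nu sum_nu0 apos Cons by simp
    then obtain alpha' where IH: "is_partition (sum_list nu) alpha'" "Q nu alpha'"
      "nu \<noteq> [] \<longrightarrow> hd alpha' = hd nu + length nu - 1"
      using less.hyps[OF _ snu pnu] by blast
    have pos: "\<forall>x\<in>set alpha'. 0 < x" using IH(1) unfolding is_partition_def by simp
    have "Q nu0 alpha'" unfolding nu0_eq by (rule Q_append_zeros[OF pos IH(2)])
    then have Qmu: "Q mu ((a + length mu') # alpha')" unfolding Cons nu0_def by (rule Q_cons[OF ge1 pos])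
    define h where "h = a + length mu'"
    have le_h: "x \<le> h" if x: "x \<in> set alpha'" for x
    proof -
      have ane: "alpha' \<noteq> []" using x by auto
      have nne: "nu \<noteq> []"
      proof
        assume "nu = []"
        then have "alpha' = []" using IH(1) partition_nil by simp
        then show False using ane by simp
      qed
      have "x \<le> hd alpha'" using IH(1) x ane unfolding is_partition_def
        by (cases alpha') auto
      also have "\<dots> = hd nu + length nu - 1" using IH(3) nne by simp
      also have "hd nu = hd nu0" using nne nu0_eq by simp
      also have "mu' \<noteq> []" using nne nu0_eq unfolding nu0_def by auto
      then have "hd nu0 = hd mu' - 1" unfolding nu0_def by (cases mu') auto
      also have "hd mu' \<le> a" using ge1 \<open>mu' \<noteq> []\<close> by (cases mu') auto
      then have "hd mu' - 1 + length nu - 1 \<le> h"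
        using nu0_eq unfolding h_def nu0_def
        by (metis (no_types, lifting) add_le_mono diff_le_self le_trans length_append length_map le_add1)
      finally show ?thesis .
    qed
    have "is_partition (sum_list mu) (h # alpha')"
      using IH(1) le_h apos sum_nu sum_nu0 unfolding is_partition_def h_def Cons by auto
    moreover have "hd (h # alpha') = hd mu + length mu - 1" unfolding h_def Cons by simp
    ultimately show ?thesis using Qmu unfolding h_def by blast
  qed
qed

lemma exists_char:
  assumes "sorted_wrt (\<ge>) mu" "\<forall>x\<in>set mu. 0 < x" "mu \<noteq> []"
  shows "\<exists>alpha. is_partition (sum_list mu) alpha \<and> character mu alpha \<noteq> 0 \<and> hd mu + length mu - 1 \<in> set alpha"
proof -
  obtain alpha where a: "is_partition (sum_list mu) alpha" "Q mu alpha" "hd alpha = hd mu + length mu - 1"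
    using exists_Q[OF assms(1,2)] assms(3) by blast
  have "sum_list mu > 0" using assms(2,3) by (cases mu) auto
  have "alpha \<noteq> []"
  proof
    assume "alpha = []"
    then have "sum_list mu = 0" using a(1) unfolding is_partition_def by simp
    then show False using \<open>sum_list mu > 0\<close> by linarith
  qed
  then show ?thesis using a Q_char by (metis list.set_sel(1))
qed



lemma length_le_sum: "\<forall>x\<in>set xs. (0::nat) < x \<Longrightarrow> length xs \<le> sum_list xs"
  by (induction xs) auto

lemma finite_partitions: "finite {alpha. is_partition m alpha}"
proof (rule finite_subset[OF _ finite_lists_length_le[of "{0..m}" m]])
  show "{alpha. is_partition m alpha} \<subseteq> {xs. set xs \<subseteq> {0..m} \<and> length xs \<le> m}"
  proof
    fix alpha assume "alpha \<in> {alpha. is_partition m alpha}"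
    then have p: "is_partition m alpha" by simp
    have "set alpha \<subseteq> {0..m}" using partition_set[OF p] by auto
    moreover have "length alpha \<le> m" using p length_le_sum[of alpha] unfolding is_partition_def by simp
    ultimately show "alpha \<in> {xs. set xs \<subseteq> {0..m} \<and> length xs \<le> m}" by simp
  qed
qed simp

lemma zee_ne0: "is_partition m alpha \<Longrightarrow> zee alpha \<noteq> 0"
  unfolding zee_def is_partition_def by (subst prod_zero_iff) auto

lemma char_poly_eq: "char_poly mu = down (\<Sum>alpha\<in>{alpha. is_partition (sum_list mu) alpha}.
   Const (of_int (character mu alpha) / of_nat (zee alpha)) * Ypol (sum_list mu) alpha)"
  unfolding char_poly_def Ypol_def yk_def Let_def ..

lemma charpoly_iff:
  assumes s: "sorted_wrt (\<ge>) mu" and p: "\<forall>x\<in>set mu. 0 < x" and i: "1 \<le> i"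
  shows "has_var_ge i (char_poly mu) \<longleftrightarrow> (mu \<noteq> [] \<and> i \<le> hd mu + length mu - 1)"
proof -
  define m where "m = sum_list mu"
  define A where "A = {alpha. is_partition m alpha}"
  define q where "q = (\<lambda>alpha. (of_int (character mu alpha) / of_nat (zee alpha)) :: rat)"
  have cp: "char_poly mu = down (\<Sum>alpha\<in>A. Const (q alpha) * Ypol m alpha)"
    unfolding char_poly_eq A_def q_def m_def ..
  have finA: "finite A" unfolding A_def by (rule finite_partitions)
  have qne: "q alpha \<noteq> 0 \<longleftrightarrow> character mu alpha \<noteq> 0" if "alpha \<in> A" for alpha
    using zee_ne0[of m alpha] that unfolding A_def q_def by simp
  show ?thesis
  proof
    assume "has_var_ge i (char_poly mu)"
    then obtain j where j: "j \<in> vars (char_poly mu)" "i \<le> j" unfolding has_var_ge_vars by blast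
    then obtain alpha where a: "alpha \<in> A" "q alpha \<noteq> 0" "j \<in> set alpha"
      using vars_S[OF finA, of q m] unfolding cp by blast
    have "mu \<noteq> [] \<and> j \<le> hd mu + length mu - 1"
      using vanish[OF s a(3)] qne[OF a(1)] a(2) by blast
    then show "mu \<noteq> [] \<and> i \<le> hd mu + length mu - 1" using j(2) by simp
  next
    assume H: "mu \<noteq> [] \<and> i \<le> hd mu + length mu - 1"
    then obtain alpha where a: "is_partition m alpha" "character mu alpha \<noteq> 0" "hd mu + length mu - 1 \<in> set alpha"
      using exists_char[OF s p] unfolding m_def by blast
    have aA: "alpha \<in> A" using a(1) unfolding A_def by simp
    have "hd mu + length mu - 1 \<in> vars (char_poly mu)"
      unfolding cp
      by (rule var_in_S[OF finA _ aA]) (use a qne[OF aA] A_def in auto)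
    then show "has_var_ge i (char_poly mu)" unfolding has_var_ge_vars using H by blast
  qed
qed



lemma conj_length: "length (conj_part lam) = (if lam = [] then 0 else hd lam)"
  unfolding conj_part_def by simp

lemma conj_nth: "lam \<noteq> [] \<Longrightarrow> j < hd lam \<Longrightarrow> conj_part lam ! j = length (filter (\<lambda>p. Suc j \<le> p) lam)"
  unfolding conj_part_def by (simp del: upt_Suc add: nth_map)

lemma length_filter_mono: "(\<And>x. PP x \<Longrightarrow> QQ x) \<Longrightarrow> length (filter PP xs) \<le> length (filter QQ xs)"
  by (induction xs) auto

lemma conj_sorted: "sorted_wrt (\<ge>) (conj_part lam)"
proof (cases "lam = []")
  case True then show ?thesis unfolding conj_part_def by simp
next
  case False
  show ?thesis
  proof (subst sorted_wrt_iff_nth_less, intro allI impI)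
    fix i j assume ij: "i < j" "j < length (conj_part lam)"
    then have "i < hd lam" "j < hd lam" using False conj_length[of lam] by auto
    then show "conj_part lam ! j \<le> conj_part lam ! i"
      using ij False by (simp add: conj_nth) (rule length_filter_mono, simp)
  qed
qed

lemma conj_pos:
  assumes "sorted_wrt (\<ge>) lam"
  shows "\<forall>x\<in>set (conj_part lam). 0 < x"
proof
  fix x assume x: "x \<in> set (conj_part lam)"
  then have ne: "lam \<noteq> []" unfolding conj_part_def by auto
  from x obtain j where j: "j < length (conj_part lam)" "x = conj_part lam ! j"
    by (metis in_set_conv_nth)
  then have jl: "j < hd lam" using ne conj_length[of lam] by simp
  have "hd lam \<in> set (filter (\<lambda>p. Suc j \<le> p) lam)" using ne jl by simp
  then have "0 < length (filter (\<lambda>p. Suc j \<le> p) lam)" by (metis length_pos_if_in_set)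
  then show "0 < x" using j conj_nth[OF ne jl] by simp
qed

lemma tl_part:
  assumes "sorted_wrt (\<ge>) xs" "\<forall>x\<in>set xs. (0::nat) < x"
  shows "sorted_wrt (\<ge>) (tl xs)" "\<forall>x\<in>set (tl xs). 0 < x"
  using assms by (cases xs; simp)+

theorem lemma3p1:
  fixes lam :: "nat list" and n i :: nat
  assumes "is_partition n lam" and "1 \<le> i"
  shows "(hook 2 1 lam \<ge> i \<and> hook 1 2 lam \<ge> i) \<longleftrightarrow>
         (has_var_ge i (char_poly (tl lam)) \<and> has_var_ge i (char_poly (tl (conj_part lam))))"
proof -
  have s: "sorted_wrt (\<ge>) lam" and p: "\<forall>x\<in>set lam. 0 < x" using assms(1) unfolding is_partition_def by auto
  define c where "c = conj_part lam"
  have sc: "sorted_wrt (\<ge>) c" and pc: "\<forall>x\<in>set c. 0 < x" unfolding c_def using conj_sorted conj_pos[OF s] by auto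
  have A: "has_var_ge i (char_poly (tl lam)) \<longleftrightarrow> i \<le> hook 2 1 lam"
  proof -
    have "has_var_ge i (char_poly (tl lam)) \<longleftrightarrow> (tl lam \<noteq> [] \<and> i \<le> hd (tl lam) + length (tl lam) - 1)"
      by (rule charpoly_iff[OF tl_part[OF s p] assms(2)])
    also have "\<dots> \<longleftrightarrow> i \<le> hook 2 1 lam"
    proof (cases "length lam \<ge> 2")
      case True
      then obtain a b rest where lam: "lam = a # b # rest" by (cases lam rule: remdups_adj.cases) auto
      have fl: "filter (\<lambda>p. Suc 0 \<le> p) lam = lam" using p by (auto simp: filter_id_conv)
      have "lam \<noteq> []" "0 < hd lam" using lam p by auto
      then have "c ! 0 = length lam"
        using conj_nth[of lam 0] fl unfolding c_def by simp
      moreover have "0 < b" using p lam by simp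
      moreover have "Suc 0 \<le> length c" using conj_length[of lam] p unfolding c_def lam by simp
      ultimately have "hook 2 1 lam = b + length lam - 2"
        unfolding hook_def part_nth_def c_def[symmetric] using lam by simp
      then show ?thesis using lam by simp
    next
      case False
      then have "tl lam = []" by (cases lam) (auto simp: Suc_le_eq)
      moreover have "hook 2 1 lam = 0" unfolding hook_def part_nth_def using False by simp
      ultimately show ?thesis using assms(2) by simp
    qed
    finally show ?thesis .
  qed
  have B: "has_var_ge i (char_poly (tl c)) \<longleftrightarrow> i \<le> hook 1 2 lam"
  proof -
    have "has_var_ge i (char_poly (tl c)) \<longleftrightarrow> (tl c \<noteq> [] \<and> i \<le> hd (tl c) + length (tl c) - 1)"
      by (rule charpoly_iff[OF tl_part[OF sc pc] assms(2)])
    also have "\<dots> \<longleftrightarrow> i \<le> hook 1 2 lam"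
    proof (cases "lam \<noteq> [] \<and> hd lam \<ge> 2")
      case True
      then have lc: "length c = hd lam" unfolding c_def conj_length by simp
      then obtain c0 c1 crest where cc: "c = c0 # c1 # crest" using True
        by (cases c rule: remdups_adj.cases) auto
      have "c1 = c ! 1" using cc by simp
      then have "0 < c1" using pc cc by simp
      have pn1: "part_nth lam 1 = hd lam" using True unfolding part_nth_def by (cases lam) auto
      have pn2: "part_nth c 2 = c1" using lc True cc unfolding part_nth_def by simp
      have "hook 1 2 lam = hd lam - 2 + c1"
        unfolding hook_def c_def[symmetric] pn1 pn2 using True \<open>0 < c1\<close> by simp arith
      then show ?thesis using cc lc True by simp arith
    next
      case False
      then have "length c \<le> 1" unfolding c_def conj_length by auto
      then have "tl c = []" by (cases c) auto
      moreover have "hook 1 2 lam = 0" unfolding hook_def part_nth_def using False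
        by (cases lam) auto
      ultimately show ?thesis using assms(2) by simp
    qed
    finally show ?thesis .
  qed
  show ?thesis using A B unfolding c_def by blast
qed

end
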